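(* Let $k\ge1$, $m_1,\dots,m_k\ge1$ integers, $s_1,\dots,s_k\in\{-1,1\}$, $w=m_1+\dots+m_k$, and let $\mathcal S(\zeta(m_1,\dots,m_k;s_1,\dots,s_k))$ denote the symbol defined in the context. (1) If at least one $m_i$ is different from $1$ and $(m_1,s_1)\neq(1,1)$, then $\mathcal S(\zeta(m_1,\dots,m_k;s_1,\dots,s_k))=0$. (2) For every $m\ge1$ and all $s_2,\dots,s_m\in\{-1,1\}$, $\mathcal S(\zeta(1,\dots,1;-1,s_2,\dots,s_m))=(1/2)^{\otimes m}$ $(=(-1)^m\,2^{\otimes m})$, i.e. it equals the symbol of $\frac{1}{m!}\ln^m\frac12$, so that $\mathcal S\big(\zeta(1,\dots,1;-1,s_2,\dots,s_m)-\frac1{m!}\ln^m\frac12\big)=0$.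
   Context: Colored multiple zeta values: $\zeta(m_1,\dots,m_k;s_1,\dots,s_k)=\sum_{0<n_1<\dots<n_k}\frac{s_1^{n_1}\cdots s_k^{n_k}}{n_1^{m_1}\cdots n_k^{m_k}}$. Put $\hat s_j=\prod_{i\le j}s_i$. Symbol calculus over $\mathbb Q$: let $V=\mathbb Q^\times\otimes_{\mathbb Z}\mathbb Q$ (a $\mathbb Q$-vector space in which torsion, in particular $-1$, becomes $0$); for $f\in\mathbb Q^\times$ write $f$ also for its image in $V$, so e.g. $(1/2)=-2$ in $V$. Tensors are taken in $V^{\otimes n}$, multilinear in the multiplicative sense ($\cdots\otimes(fg)\otimes\cdots=\cdots\otimes f\otimes\cdots+\cdots\otimes g\otimes\cdots$), and any formal tensor one of whose factors is the number $0$ is interpreted as $0\in V^{\otimes n}$. For $x,y$ define $\mu(x,y)=1-y/x$ if $x\neq0$ and $\mu(0,y)=y$. For a tuple $(a_1,\dots,a_n)$, $n\ge2$ (the "decorated polygon" $P(a_1,\dots,a_n)$ with root decoration $a_n$, attached to the multiple polylogarithm $G(a_{n-1},\dots,a_1;a_n)$), define $\mathcal S(a_1,\dots,a_n)\in V^{\otimes(n-1)}$ recursively by $\mathcal S(a_1,a_2)=\mu(a_1,a_2)$ and, for $n\ge3$, $\mathcal S(a_1,\dots,a_n)=\sum_{i=1}^{n-1}\mathcal S(a_1,\dots,\widehat{a_i},\dots,a_n)\otimes\mu(a_i,a_{i+1})-\sum_{i=2}^{n-1}\mathcal S(a_1,\dots,\widehat{a_i},\dots,a_n)\otimes\mu(a_i,a_{i-1})$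 (hat = omitted). The symbol of a colored MZV is defined as $\mathcal S(\zeta(m_1,\dots,m_k;s_1,\dots,s_k))=(-1)^w\,\mathcal S(\underbrace{0,\dots,0}_{m_k-1},\hat s_k,\underbrace{0,\dots,0}_{m_{k-1}-1},\hat s_{k-1},\dots,\underbrace{0,\dots,0}_{m_1-1},\hat s_1,1)$. The symbol of $\frac1{m!}\ln^m c$ is $c^{\otimes m}=c\otimes\cdots\otimes c$ ($m$ factors). *)

theory Defs
  imports Complex_Main "HOL-Computational_Algebra.Primes"
begin

text \<open>Model of V = Q^x (x) Q: via the p-adic valuations, V is identified with the
  Q-vector space with basis the primes (signs, in particular -1, become 0).
  An element of V^(x)n is represented by its coefficient function on
  lists of primes of length n (type nat list => rat); coefficients on other
  lists are 0.\<close>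

definition vval :: "rat \<Rightarrow> nat \<Rightarrow> rat" where
  "vval q p = (if prime p \<and> q \<noteq> 0 then
      of_nat (multiplicity (int p) (fst (quotient_of q)))
      - of_nat (multiplicity (int p) (snd (quotient_of q))) else 0)"

definition tens :: "rat list \<Rightarrow> nat list \<Rightarrow> rat" where
  "tens fs ps = (if length ps = length fs
                 then (\<Prod>i<length fs. vval (fs ! i) (ps ! i)) else 0)"

definition tens_right :: "(nat list \<Rightarrow> rat) \<Rightarrow> rat \<Rightarrow> nat list \<Rightarrow> rat" where
  "tens_right T f ps = (if ps = [] then 0 else T (butlast ps) * vval f (last ps))"

definition mu :: "rat \<Rightarrow> rat \<Rightarrow> rat" where
  "mu x y = (if x \<noteq> 0 then 1 - y / x else y)"

definition remove_nth :: "nat \<Rightarrow> 'a list \<Rightarrow> 'a list" where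
  "remove_nth i xs = take i xs @ drop (Suc i) xs"

text \<open>Symbol of the decorated polygon P(a_1,...,a_n) (list index 0-based);
  first argument is a fuel equal to the length of the list.\<close>
primrec symb_aux :: "nat \<Rightarrow> rat list \<Rightarrow> nat list \<Rightarrow> rat" where
  "symb_aux 0 as ps = 0"
| "symb_aux (Suc n) as ps =
     (if length as = 2 then tens [mu (as ! 0) (as ! 1)] ps
      else if length as \<ge> 3 then
        (\<Sum>i<length as - 1. tens_right (symb_aux n (remove_nth i as)) (mu (as ! i) (as ! Suc i)) ps)
        - (\<Sum>i\<in>{1..<length as - 1}. tens_right (symb_aux n (remove_nth i as)) (mu (as ! i) (as ! (i - 1))) ps)
      else 0)"

definition symb :: "rat list \<Rightarrow> nat list \<Rightarrow> rat" where
  "symb as = symb_aux (length as) as"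

text \<open>Symbol of zeta(m_1,...,m_k; s_1,...,s_k), with ms = [m_1,...,m_k],
  ss = [s_1,...,s_k]; hat s_j = s_1 * ... * s_j.\<close>
definition zeta_word :: "nat list \<Rightarrow> rat list \<Rightarrow> rat list" where
  "zeta_word ms ss =
     concat (map (\<lambda>j. replicate (ms ! j - 1) 0 @ [prod_list (take (Suc j) ss)])
                 (rev [0..<length ms])) @ [1]"

definition zeta_symb :: "nat list \<Rightarrow> rat list \<Rightarrow> nat list \<Rightarrow> rat" where
  "zeta_symb ms ss = (\<lambda>ps. (-1) ^ sum_list ms * symb (zeta_word ms ss) ps)"

end

theory Submission
  imports Defs
begin
lemma vval0[simp]: "vval 0 p = 0" by (simp add: vval_def)
lemma vval1[simp]: "vval 1 p = 0" by (simp add: vval_def)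
lemma vvalm1[simp]: "vval (-1) p = 0"
  by (simp add: vval_def multiplicity_unit_right)
lemma vvalhalf: "vval (1/2) p = - vval 2 p"
proof -
  have "quotient_of (1/2::rat) = (1,2)"
  proof -
    have "(1/2::rat) = Fract 1 2" by (simp add: Fract_of_int_quotient)
    moreover have "quotient_of (Fract 1 2) = (1,2)"
      unfolding quotient_of_Fract by (simp add: normalize_def)
    ultimately show ?thesis by metis
  qed
  moreover have "quotient_of (2::rat) = (2,1)" by simp
  ultimately show ?thesis by (simp add: vval_def)
qed

lemma symb_2: "length as = 2 \<Longrightarrow> symb as ps = tens [mu (as!0) (as!1)] ps"
  by (simp add: symb_def numeral_2_eq_2)

lemma len_remove: "i < length as \<Longrightarrow> length (remove_nth i as) = length as - 1"
  by (simp add: remove_nth_def)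

lemma symb_ge3: "length as \<ge> 3 \<Longrightarrow> symb as ps =
   (\<Sum>i<length as - 1. tens_right (symb (remove_nth i as)) (mu (as!i) (as!Suc i)) ps)
 - (\<Sum>i\<in>{1..<length as - 1}. tens_right (symb (remove_nth i as)) (mu (as!i) (as!(i-1))) ps)"
proof -
  assume a: "length as \<ge> 3"
  then obtain n where n: "length as = Suc n" by (cases "length as") auto
  have r: "\<And>i. i < length as \<Longrightarrow> symb (remove_nth i as) = symb_aux n (remove_nth i as)"
    using n by (simp add: symb_def len_remove)
  show ?thesis
    unfolding symb_def n using a n
    by (auto simp: r len_remove intro!: arg_cong2[where f="(-)"] sum.cong)
qed

lemma set_remove: "set (remove_nth i as) \<subseteq> set as"
  unfolding remove_nth_def using set_take_subset set_drop_subset by fastforce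

lemma zero_remove: "i < length as \<Longrightarrow> as!i \<noteq> 0 \<Longrightarrow> 0 \<in> set as \<Longrightarrow> 0 \<in> set (remove_nth i as)"
proof -
  assume a: "i < length as" "as!i \<noteq> 0" "0 \<in> set as"
  have "as = take i as @ as!i # drop (Suc i) as" using a(1) by (rule id_take_nth_drop)
  then have "set as = set (take i as) \<union> insert (as!i) (set (drop (Suc i) as))"
    by (metis set_append list.set(2))
  then show ?thesis using a by (auto simp: remove_nth_def)
qed

lemma tr_zero: "(\<And>p. vval f p = 0) \<Longrightarrow> tens_right T f ps = 0"
  by (simp add: tens_right_def)
lemma tr_zero2: "(\<And>q. T q = 0) \<Longrightarrow> tens_right T f ps = 0"
  by (simp add: tens_right_def)

lemma vval_small: "y \<in> {0,1,-1} \<Longrightarrow> vval y p = 0" by auto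

lemma symb_zero: "set as \<subseteq> {0,1,-1} \<Longrightarrow> 0 \<in> set as \<Longrightarrow> symb as ps = 0"
proof (induction "length as" arbitrary: as ps rule: less_induct)
  case less
  show ?case
  proof (cases "length as \<le> 2")
    case True
    then consider "length as = 0" | "length as = 1" | "length as = 2" by linarith
    then show ?thesis
    proof cases
      case 1 then show ?thesis by (simp add: symb_def)
    next
      case 2 then show ?thesis by (simp add: symb_def)
    next
      case 3
      then obtain a b where ab: "as = [a,b]"
        by (metis (no_types, opaque_lifting) One_nat_def Suc_1 length_0_conv length_Suc_conv)
      have "vval (mu a b) p = 0" for p
      proof (cases "a = 0")
        case True
        then show ?thesis using less.prems ab by (auto simp: mu_def)
      next
        case False
        then have "b = 0" using less.prems ab by auto
        then show ?thesis using False by (simp add: mu_def)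
      qed
      then show ?thesis using 3 ab by (simp add: symb_2 tens_def)
    qed
  next
    case False
    have Z: "tens_right (symb (remove_nth i as)) (mu (as!i) y) ps = 0"
      if i: "i < length as" and y: "y \<in> set as" for i y
    proof (cases "as!i = 0")
      case True
      have "y \<in> {0,1,-1}" using y less.prems(1) by blast
      then have "vval y p = 0" for p by (rule vval_small)
      then show ?thesis using True by (intro tr_zero) (simp add: mu_def)
    next
      case F: False
      have l: "length (remove_nth i as) < length as" using i False len_remove[OF i] by simp
      have s: "set (remove_nth i as) \<subseteq> {0,1,-1}"
        using set_remove[of i as] less.prems(1) by (rule order_trans)
      have z: "0 \<in> set (remove_nth i as)" using zero_remove[OF i F less.prems(2)] .
      have "symb (remove_nth i as) q = 0" for q
        using less.hyps[OF l s z] .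
      then show ?thesis by (intro tr_zero2)
    qed
    have "(\<Sum>i<length as - 1. tens_right (symb (remove_nth i as)) (mu (as!i) (as!Suc i)) ps) = 0"
    proof (rule sum.neutral, rule ballI)
      fix i assume "i \<in> {..<length as - 1}"
      then have "i < length as" "Suc i < length as" by auto
      then show "tens_right (symb (remove_nth i as)) (mu (as!i) (as!Suc i)) ps = 0"
        by (intro Z) simp_all
    qed
    moreover have "(\<Sum>i\<in>{1..<length as - 1}. tens_right (symb (remove_nth i as)) (mu (as!i) (as!(i-1))) ps) = 0"
    proof (rule sum.neutral, rule ballI)
      fix i assume "i \<in> {1..<length as - 1}"
      then have "i < length as" "i - 1 < length as" by auto
      then show "tens_right (symb (remove_nth i as)) (mu (as!i) (as!(i-1))) ps = 0"
        by (intro Z) simp_all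
    qed
    ultimately show ?thesis using False by (subst symb_ge3) simp_all
  qed
qed

lemma tens_snoc: "ps \<noteq> [] \<Longrightarrow> tens (fs @ [f]) ps = tens fs (butlast ps) * vval f (last ps)"
proof -
  assume ps: "ps \<noteq> []"
  show ?thesis
  proof (cases "length ps = Suc (length fs)")
    case True
    have "tens (fs @ [f]) ps = (\<Prod>i<Suc (length fs). vval ((fs @ [f]) ! i) (ps ! i))"
      using True by (simp add: tens_def)
    also have "\<dots> = (\<Prod>i<length fs. vval ((fs @ [f]) ! i) (ps ! i)) * vval f (ps ! length fs)"
      by (simp add: nth_append)
    also have "(\<Prod>i<length fs. vval ((fs @ [f]) ! i) (ps ! i)) = (\<Prod>i<length fs. vval (fs ! i) (butlast ps ! i))"
      using True by (intro prod.cong) (auto simp: nth_append nth_butlast)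
    also have "ps ! length fs = last ps" using True ps by (simp add: last_conv_nth)
    finally show ?thesis using True by (simp add: tens_def)
  next
    case False
    then show ?thesis using ps by (cases ps) (auto simp: tens_def)
  qed
qed

lemma e_pm: "x \<in> {1,-1} \<Longrightarrow> y \<in> {1,-1} \<Longrightarrow> vval (mu x y) p = (if x = y then 0 else vval 2 p)"
  by (auto simp: mu_def)

lemma telescope: "(\<Sum>i<Suc K. g i) - (\<Sum>i\<in>{1..<Suc K}. g (i - 1)) = (g K :: rat)"
proof (induction K)
  case 0 then show ?case by simp
next
  case (Suc K)
  have "(\<Sum>i\<in>{1..<Suc (Suc K)}. g (i - 1)) = (\<Sum>i\<in>{1..<Suc K}. g (i - 1)) + g K"
    by simp
  then show ?case using Suc by simp
qed

lemma remove_app: "i < length xs \<Longrightarrow> remove_nth i (xs @ zs) = remove_nth i xs @ zs"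
  by (simp add: remove_nth_def)

lemma remove_mid: "remove_nth (length xs) (xs @ z # zs) = xs @ zs"
  by (simp add: remove_nth_def)

lemma symb_pm: "set xs \<subseteq> {1,-1} \<Longrightarrow> symb (xs @ [-1,1]) ps = tens (replicate (Suc (length xs)) 2) ps"
proof (induction "length xs" arbitrary: xs ps rule: less_induct)
  case less
  show ?case
  proof (cases xs rule: rev_exhaust)
    case Nil
    have "mu (-1) 1 = 2" by (simp add: mu_def)
    then show ?thesis using Nil by (simp add: symb_2)
  next
    case (snoc ys b)
    define as where "as = xs @ [-1,1]"
    define L where "L = length xs"
    have L1: "L \<ge> 1" using snoc L_def by simp
    have las: "length as = L + 2" by (simp add: as_def L_def)
    have b: "b \<in> {1,-1}" using less.prems snoc by auto
    have ys: "set ys \<subseteq> {1,-1}" using less.prems snoc by auto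
    have asm: "\<And>i. i < L + 2 \<Longrightarrow> as ! i \<in> {1,-1}"
    proof -
      fix i assume "i < L + 2"
      then have "as ! i \<in> set as" using las by simp
      then show "as ! i \<in> {1,-1}" using less.prems by (auto simp: as_def)
    qed
    have aL: "as ! L = -1" "as ! Suc L = 1" by (simp_all add: as_def L_def nth_append)
    have aL1: "as ! (L - 1) = b" using snoc by (simp add: as_def L_def nth_append)
    have IHr: "symb (remove_nth i as) = tens (replicate L 2)" if i: "i < L" for i
    proof
      fix q
      have r: "remove_nth i as = remove_nth i xs @ [-1,1]"
        using i by (simp add: as_def L_def remove_app)
      have l: "length (remove_nth i xs) < length xs" using i len_remove[of i xs] by (simp add: L_def)
      have st: "set (remove_nth i xs) \<subseteq> {1,-1}" using set_remove[of i xs] less.prems by blast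
      have "Suc (length (remove_nth i xs)) = L" using i len_remove[of i xs] by (simp add: L_def)
      then show "symb (remove_nth i as) q = tens (replicate L 2) q"
        using less.hyps[OF l st, of q] r by simp
    qed
    have remL: "remove_nth L as = ys @ [b,1]"
      using remove_mid[of xs "-1" "[1]"] snoc by (simp add: as_def L_def)
    have "symb as ps = tens (replicate (Suc L) 2) ps"
    proof (cases "ps = []")
      case True
      then show ?thesis using las L1 by (subst symb_ge3) (simp_all add: tens_right_def tens_def)
    next
      case False
      define T where "T = tens (replicate L 2) (butlast ps)"
      define v where "v = vval 2 (last ps)"
      define S where "S = symb (ys @ [b,1]) (butlast ps)"
      define e where "e i j = vval (mu (as!i) (as!j)) (last ps)" for i j
      have e_eq: "e i j = (if as!i = as!j then 0 else v)" if "i < L+2" "j < L+2" for i j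
        using e_pm[OF asm[OF that(1)] asm[OF that(2)]] by (simp add: e_def v_def)
      have rhs: "tens (replicate (Suc L) 2) ps = T * v"
        using tens_snoc[OF False, of "replicate L 2" 2]
        by (simp add: T_def v_def replicate_append_same[symmetric])
      have s1: "(\<Sum>i<length as - 1. tens_right (symb (remove_nth i as)) (mu (as!i) (as!Suc i)) ps)
          = (\<Sum>i<L. T * e i (Suc i)) + S * v"
      proof -
        have "length as - 1 = Suc L" using las by simp
        moreover have "(\<Sum>i<L. tens_right (symb (remove_nth i as)) (mu (as!i) (as!Suc i)) ps)
            = (\<Sum>i<L. T * e i (Suc i))"
          using False by (intro sum.cong) (simp_all add: IHr tens_right_def T_def e_def)
        moreover have "tens_right (symb (remove_nth L as)) (mu (as!L) (as!Suc L)) ps = S * v"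
          using False aL e_eq[of L "Suc L"] by (simp add: tens_right_def remL S_def e_def)
        ultimately show ?thesis by simp
      qed
      have s2: "(\<Sum>i\<in>{1..<length as - 1}. tens_right (symb (remove_nth i as)) (mu (as!i) (as!(i-1))) ps)
          = (\<Sum>i\<in>{1..<L}. T * e (i - 1) (Suc (i - 1))) + S * e (L - 1) L"
      proof -
        have "length as - 1 = Suc L" using las by simp
        moreover have "(\<Sum>i\<in>{1..<L}. tens_right (symb (remove_nth i as)) (mu (as!i) (as!(i-1))) ps)
            = (\<Sum>i\<in>{1..<L}. T * e (i - 1) (Suc (i - 1)))"
        proof (intro sum.cong refl)
          fix i assume i: "i \<in> {1..<L}"
          then have "Suc (i - 1) = i" by simp
          moreover have "e i (i - 1) = e (i - 1) i" using i e_eq[of i "i - 1"] e_eq[of "i - 1" i] by auto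
          ultimately show "tens_right (symb (remove_nth i as)) (mu (as!i) (as!(i-1))) ps = T * e (i - 1) (Suc (i - 1))"
            using False i by (simp add: IHr tens_right_def T_def e_def)
        qed
        moreover have "tens_right (symb (remove_nth L as)) (mu (as!L) (as!(L-1))) ps = S * e (L - 1) L"
        proof -
          have "e L (L - 1) = e (L - 1) L" using e_eq[of L "L - 1"] e_eq[of "L - 1" L] by auto
          then show ?thesis using False by (simp add: tens_right_def remL S_def e_def)
        qed
        ultimately show ?thesis using L1 by (simp add: sum.op_ivl_Suc)
      qed
      have tel: "(\<Sum>i<L. T * e i (Suc i)) - (\<Sum>i\<in>{1..<L}. T * e (i - 1) (Suc (i - 1))) = T * e (L - 1) L"
        using telescope[where K="L - 1" and g="\<lambda>i. T * e i (Suc i)"] L1 by simp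
      have eL: "e (L - 1) L = (if b = -1 then 0 else v)"
        using e_eq[of "L - 1" L] aL aL1 b by auto
      have "symb as ps = T * e (L - 1) L + S * v - S * e (L - 1) L"
        using las s1 s2 tel L1 by (subst symb_ge3) (simp_all add: algebra_simps)
      also have "\<dots> = T * v"
      proof (cases "b = -1")
        case True
        have "S = T"
          using less.hyps[of ys "butlast ps"] ys snoc True by (simp add: S_def T_def L_def)
        then show ?thesis using eL True by simp
      next
        case F: False
        then show ?thesis using eL by simp
      qed
      finally show ?thesis using rhs by simp
    qed
    then show ?thesis by (simp add: as_def L_def)
  qed
qed

lemma prod_pm: "set ss \<subseteq> {1,-1} \<Longrightarrow> prod_list ss \<in> {1,-1::rat}"
  by (induction ss) auto

lemma word_set: "set ss \<subseteq> {1,-1} \<Longrightarrow> set (zeta_word ms ss) \<subseteq> {0,1,-1}"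
proof -
  assume a: "set ss \<subseteq> {1,-1}"
  have "prod_list (take j ss) \<in> {1,-1}" for j
    using a set_take_subset[of j ss] by (intro prod_pm) blast
  then show ?thesis by (auto simp: zeta_word_def)
qed

lemma word_zero: "m \<in> set ms \<Longrightarrow> m \<ge> 2 \<Longrightarrow> 0 \<in> set (zeta_word ms ss)"
proof -
  assume a: "m \<in> set ms" "m \<ge> 2"
  then obtain j where j: "j < length ms" "ms ! j = m" by (auto simp: in_set_conv_nth)
  have "0 \<in> set (replicate (ms ! j - 1) 0 @ [prod_list (take (Suc j) ss)])" using j a by simp
  moreover have "j \<in> set (rev [0..<length ms])" using j by simp
  ultimately show ?thesis unfolding zeta_word_def by auto
qed

lemma prod_neg: "(\<Prod>i<m. - f i) = (-1)^m * (\<Prod>i<m. f i :: rat)"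
  by (induction m) auto

theorem proposition4:
  shows "(\<forall>ms ss. length ms \<ge> 1 \<longrightarrow> length ss = length ms
            \<longrightarrow> (\<forall>m\<in>set ms. m \<ge> 1) \<longrightarrow> (\<forall>s\<in>set ss. s = 1 \<or> s = -1)
            \<longrightarrow> (\<exists>m\<in>set ms. m \<noteq> 1) \<longrightarrow> \<not> (ms ! 0 = 1 \<and> ss ! 0 = 1)
            \<longrightarrow> zeta_symb ms ss = (\<lambda>_. 0))
       \<and> (\<forall>m ss. m \<ge> 1 \<longrightarrow> length ss = m \<longrightarrow> (\<forall>s\<in>set ss. s = 1 \<or> s = -1)
            \<longrightarrow> ss ! 0 = -1
            \<longrightarrow> zeta_symb (replicate m 1) ss = tens (replicate m (1/2)))"
proof (intro conjI allI impI)
  fix ms :: "nat list" and ss :: "rat list"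
  assume h: "\<forall>m\<in>set ms. m \<ge> 1" "\<forall>s\<in>set ss. s = 1 \<or> s = -1" "\<exists>m\<in>set ms. m \<noteq> 1"
  then obtain m where m: "m \<in> set ms" "m \<ge> 2" by force
  have "set ss \<subseteq> {1,-1}" using h by auto
  then have "symb (zeta_word ms ss) ps = 0" for ps
    using symb_zero[OF word_set word_zero[OF m]] by blast
  then show "zeta_symb ms ss = (\<lambda>_. 0)" by (simp add: zeta_symb_def)
next
  fix m :: nat and ss :: "rat list"
  assume h: "m \<ge> 1" "length ss = m" "\<forall>s\<in>set ss. s = 1 \<or> s = -1" "ss ! 0 = -1"
  define p where "p j = prod_list (take (Suc j) ss)" for j
  define xs where "xs = map p (rev [1..<m])"
  have p0: "p 0 = -1" using h by (cases ss) (auto simp: p_def)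
  have r: "rev [0..<m] = rev [1..<m] @ [0]" using h(1) by (simp add: upt_conv_Cons)
  have c: "map (\<lambda>j. replicate (replicate m (1::nat) ! j - 1) 0 @ [p j]) (rev [0..<m])
      = map (\<lambda>j. [p j]) (rev [0..<m])"
    by (rule map_cong) auto
  have w: "zeta_word (replicate m 1) ss = xs @ [-1, 1]"
    unfolding zeta_word_def length_replicate xs_def p_def[symmetric] c concat_map_singleton using r p0 by simp
  have sx: "set xs \<subseteq> {1,-1}"
  proof -
    have "set ss \<subseteq> {1,-1}" using h by auto
    then have "prod_list (take j ss) \<in> {1,-1}" for j
      using set_take_subset[of j ss] by (intro prod_pm) blast
    then show ?thesis by (auto simp: xs_def p_def)
  qed
  have lx: "Suc (length xs) = m" using h(1) by (simp add: xs_def)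
  show "zeta_symb (replicate m 1) ss = tens (replicate m (1/2))"
  proof
    fix ps
    have "zeta_symb (replicate m 1) ss ps = (-1)^m * tens (replicate m 2) ps"
      using symb_pm[OF sx, of ps] lx w by (simp add: zeta_symb_def sum_list_replicate)
    also have "\<dots> = tens (replicate m (1/2)) ps"
      by (simp add: tens_def vvalhalf prod_neg)
    finally show "zeta_symb (replicate m 1) ss ps = tens (replicate m (1/2)) ps" .
  qed
qed
end
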